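(* Let $X$ be a separable infinite dimensional Banach space and $1\le p<\infty$. There does not exist $F\in\ell_p(\mathbb{Z},X)$ such that $\{F^{(k)}:k\in\mathbb{Z}\}$, in some order, is a (Schauder) basis for $\ell_p(\mathbb{Z},X)$.
   Context: $\ell_p(\mathbb{Z},X)=(\bigoplus_{n\in\mathbb{Z}}X)_{\ell_p}$ is the space of sequences $(f_n)_{n\in\mathbb{Z}}$ in $X$ with $\sum_n\|f_n\|^p<\infty$, normed by $(\sum_n\|f_n\|^p)^{1/p}$. For $F=(f_n)_{n\in\mathbb{Z}}$ and $k\in\mathbb{Z}$, $F^{(k)}=(f_{n-k})_{n\in\mathbb{Z}}$ is the shift of $F$ to the right by $k$. *)

theory Defs
  imports "HOL-Analysis.Analysis"
begin

definition lp_space :: "real \<Rightarrow> (int \<Rightarrow> 'a::real_normed_vector) set" where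
  "lp_space p = {f. (\<lambda>n. norm (f n) powr p) summable_on UNIV}"

definition lp_norm :: "real \<Rightarrow> (int \<Rightarrow> 'a::real_normed_vector) \<Rightarrow> real" where
  "lp_norm p f = (\<Sum>\<^sub>\<infinity>n. norm (f n) powr p) powr (1 / p)"

definition shift :: "int \<Rightarrow> (int \<Rightarrow> 'a) \<Rightarrow> (int \<Rightarrow> 'a)" where
  "shift k F = (\<lambda>n. F (n - k))"

definition lp_expansion ::
  "real \<Rightarrow> (nat \<Rightarrow> int \<Rightarrow> 'a::real_normed_vector) \<Rightarrow> (nat \<Rightarrow> real) \<Rightarrow> (int \<Rightarrow> 'a) \<Rightarrow> bool" where
  "lp_expansion p e a G \<longleftrightarrow>
     (\<lambda>N. lp_norm p (\<lambda>k. G k - (\<Sum>i<N. a i *\<^sub>R e i k))) \<longlonglongrightarrow> 0"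

definition lp_schauder_basis :: "real \<Rightarrow> (nat \<Rightarrow> int \<Rightarrow> 'a::real_normed_vector) \<Rightarrow> bool" where
  "lp_schauder_basis p e \<longleftrightarrow>
     (\<forall>i. e i \<in> lp_space p) \<and>
     (\<forall>G \<in> lp_space p. \<exists>!a. lp_expansion p e a G)"

end

theory Submission
  imports Defs
begin


lemma nn_bounded_summable:
  fixes f :: "'b \<Rightarrow> real"
  assumes "\<And>n. f n \<ge> 0" "\<And>S. finite S \<Longrightarrow> sum f S \<le> B"
  shows "f summable_on UNIV" "infsum f UNIV \<le> B"
proof -
  show s: "f summable_on UNIV"
    by (rule nonneg_bdd_above_summable_on) (use assms in \<open>auto intro!: bdd_aboveI2\<close>)
  show "infsum f UNIV \<le> B" by (rule infsum_le_finite_sums[OF s]) (use assms in auto)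
qed

lemma lp_norm_nonneg: "lp_norm p G \<ge> 0"
  by (simp add: lp_norm_def)

lemma infsum_pow_nonneg: "infsum (\<lambda>n. norm (G n) powr p) A \<ge> 0"
  by (simp add: infsum_nonneg)

lemma lp_norm_pow:
  assumes "p > 0"
  shows "lp_norm p G powr p = infsum (\<lambda>n. norm (G n) powr p) UNIV"
  using assms by (simp add: lp_norm_def powr_powr infsum_pow_nonneg)

lemma term_le_infsum:
  assumes "G \<in> lp_space p"
  shows "norm (G n) powr p \<le> infsum (\<lambda>n. norm (G n) powr p) UNIV"
proof -
  have "sum (\<lambda>n. norm (G n) powr p) {n} \<le> infsum (\<lambda>n. norm (G n) powr p) UNIV"
    by (rule finite_sum_le_infsum) (use assms in \<open>auto simp: lp_space_def\<close>)
  then show ?thesis by simp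
qed

lemma pointwise_le_lp_norm:
  assumes "G \<in> lp_space p" "p > 0"
  shows "norm (G n) \<le> lp_norm p G"
proof -
  have "norm (G n) = (norm (G n) powr p) powr (1/p)" using assms by (simp add: powr_powr)
  also have "\<dots> \<le> lp_norm p G" unfolding lp_norm_def
    by (rule powr_mono2) (use assms term_le_infsum in auto)
  finally show ?thesis .
qed

lemma lp_norm_zero_iff:
  assumes "G \<in> lp_space p" "p > 0"
  shows "lp_norm p G = 0 \<longleftrightarrow> G = (\<lambda>n. 0)"
proof
  assume "lp_norm p G = 0"
  then show "G = (\<lambda>n. 0)" using pointwise_le_lp_norm[OF assms]
    by (metis norm_le_zero_iff ext)
qed (simp add: lp_norm_def)

lemma lp_space_iff_bounded:
  "G \<in> lp_space p \<longleftrightarrow> (\<exists>B. \<forall>S. finite S \<longrightarrow> sum (\<lambda>n. norm (G n) powr p) S \<le> B)"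
proof
  assume "G \<in> lp_space p"
  then show "\<exists>B. \<forall>S. finite S \<longrightarrow> sum (\<lambda>n. norm (G n) powr p) S \<le> B"
    by (intro exI[of _ "infsum (\<lambda>n. norm (G n) powr p) UNIV"] allI impI finite_sum_le_infsum)
      (auto simp: lp_space_def)
next
  assume "\<exists>B. \<forall>S. finite S \<longrightarrow> sum (\<lambda>n. norm (G n) powr p) S \<le> B"
  then show "G \<in> lp_space p" unfolding lp_space_def
    using nn_bounded_summable(1)[of "\<lambda>n. norm (G n) powr p"] by auto
qed

lemma lp_space_comparison:
  assumes "H \<in> lp_space p" "\<And>n. norm (G n) powr p \<le> c * norm (H n) powr p" "c \<ge> 0"
  shows "G \<in> lp_space p"
proof -
  obtain B where B: "\<And>S. finite S \<Longrightarrow> sum (\<lambda>n. norm (H n) powr p) S \<le> B"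
    using assms(1) lp_space_iff_bounded by blast
  have "sum (\<lambda>n. norm (G n) powr p) S \<le> c * B" if "finite S" for S
  proof -
    have "sum (\<lambda>n. norm (G n) powr p) S \<le> sum (\<lambda>n. c * norm (H n) powr p) S"
      by (rule sum_mono) (use assms in auto)
    also have "\<dots> = c * sum (\<lambda>n. norm (H n) powr p) S" by (simp add: sum_distrib_left)
    also have "\<dots> \<le> c * B" using B[OF that] assms(3) by (simp add: mult_left_mono)
    finally show ?thesis .
  qed
  then show ?thesis using lp_space_iff_bounded by blast
qed

lemma lp_space_add:
  assumes "G \<in> lp_space p" "H \<in> lp_space p" "p > 0"
  shows "(\<lambda>n. G n + H n) \<in> lp_space p"
proof -
  have GH: "(\<lambda>n. norm (G n) powr p + norm (H n) powr p) summable_on UNIV"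
    using assms by (intro summable_on_add) (auto simp: lp_space_def)
  have "norm (G n + H n) powr p \<le> 2 powr p * (norm (G n) powr p + norm (H n) powr p)" for n
  proof -
    have "norm (G n + H n) \<le> 2 * max (norm (G n)) (norm (H n))"
      using norm_triangle_ineq[of "G n" "H n"] by linarith
    then have "norm (G n + H n) powr p \<le> (2 * max (norm (G n)) (norm (H n))) powr p"
      using assms(3) by (intro powr_mono2) auto
    also have "\<dots> = 2 powr p * max (norm (G n)) (norm (H n)) powr p"
      by (simp add: powr_mult)
    also have "\<dots> \<le> 2 powr p * (norm (G n) powr p + norm (H n) powr p)"
      by (intro mult_left_mono) (auto simp: max_def)
    finally show ?thesis .
  qed
  moreover have "(\<lambda>n. 2 powr p * (norm (G n) powr p + norm (H n) powr p)) summable_on UNIV"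
    using GH by (rule summable_on_cmult_right)
  ultimately show ?thesis unfolding lp_space_def
    by (auto intro: summable_on_comparison_test)
qed


lemma powr_convex_nn:
  fixes s t l p :: real
  assumes "0 \<le> s" "0 \<le> t" "0 \<le> l" "l \<le> 1" "1 \<le> p"
  shows "(l * s + (1 - l) * t) powr p \<le> l * s powr p + (1 - l) * t powr p"
proof (cases "s > 0 \<and> t > 0")
  case True
  have "((1 - l) *\<^sub>R t + l *\<^sub>R s) powr p \<le> (1 - l) * t powr p + l * s powr p"
    using convex_onD[OF powr_convex[OF assms(5)], of l t s] True assms by auto
  then show ?thesis by (simp add: algebra_simps)
next
  case False
  have pw: "x powr p \<le> x" if "0 \<le> x" "x \<le> 1" for x :: real
    using that powr_le_one_le[of x p] assms(5) by (cases "x = 0") auto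
  show ?thesis
  proof (cases "s = 0")
    case True
    have "((1 - l) * t) powr p = (1 - l) powr p * t powr p" by (simp add: powr_mult)
    also have "\<dots> \<le> (1 - l) * t powr p"
      using pw[of "1-l"] assms by (intro mult_right_mono) auto
    finally show ?thesis using True assms by simp
  next
    case False
    then have "t = 0" using \<open>\<not> (s > 0 \<and> t > 0)\<close> assms by auto
    have "(l * s) powr p = l powr p * s powr p" by (simp add: powr_mult)
    also have "\<dots> \<le> l * s powr p"
      using pw[of "l"] assms by (intro mult_right_mono) auto
    finally show ?thesis using \<open>t = 0\<close> assms by simp
  qed
qed

lemma lp_norm_scale:
  assumes "p > 0"
  shows "lp_norm p (\<lambda>n. c *\<^sub>R G n) = \<bar>c\<bar> * lp_norm p G"
proof -
  have "infsum (\<lambda>n. norm (c *\<^sub>R G n) powr p) UNIV = \<bar>c\<bar> powr p * infsum (\<lambda>n. norm (G n) powr p) UNIV"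
    by (simp add: powr_mult infsum_cmult_right')
  then show ?thesis using assms
    by (simp add: lp_norm_def powr_mult powr_powr)
qed

lemma lp_space_scale:
  assumes "G \<in> lp_space p"
  shows "(\<lambda>n. c *\<^sub>R G n) \<in> lp_space p"
  using assms unfolding lp_space_def
  by (simp add: powr_mult summable_on_cmult_right)

lemma lp_space_zero: "(\<lambda>n. 0) \<in> lp_space p"
  by (simp add: lp_space_def)

lemma lp_space_minus:
  assumes "G \<in> lp_space p"
  shows "(\<lambda>n. - G n) \<in> lp_space p"
  using lp_space_scale[OF assms, of "-1"] by simp

lemma lp_space_diff:
  assumes "G \<in> lp_space p" "H \<in> lp_space p" "p > 0"
  shows "(\<lambda>n. G n - H n) \<in> lp_space p"
  using lp_space_add[OF assms(1) lp_space_minus[OF assms(2)] assms(3)] by simp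

lemma lp_norm_minus: "lp_norm p (\<lambda>n. - G n) = lp_norm p G"
  by (simp add: lp_norm_def)

lemma lp_norm_commute: "lp_norm p (\<lambda>n. G n - H n) = lp_norm p (\<lambda>n. H n - G n)"
  by (simp add: lp_norm_def norm_minus_commute)

lemma lp_minkowski:
  assumes G: "G \<in> lp_space p" and H: "H \<in> lp_space p" and p: "1 \<le> p"
  shows "lp_norm p (\<lambda>n. G n + H n) \<le> lp_norm p G + lp_norm p H"
proof -
  define a where "a = lp_norm p G"
  define b where "b = lp_norm p H"
  have p0: "p > 0" using p by auto
  have a0: "a \<ge> 0" "b \<ge> 0" by (auto simp: a_def b_def lp_norm_nonneg)
  show ?thesis
  proof (cases "a = 0 \<or> b = 0")
    case True
    then show ?thesis
    proof
      assume "a = 0"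
      then have "G = (\<lambda>n. 0)" using lp_norm_zero_iff[OF G p0] a_def by auto
      then show ?thesis by (simp add: lp_norm_nonneg)
    next
      assume "b = 0"
      then have "H = (\<lambda>n. 0)" using lp_norm_zero_iff[OF H p0] b_def by auto
      then show ?thesis by (simp add: lp_norm_nonneg)
    qed
  next
    case False
    then have apos: "a > 0" "b > 0" using a0 by auto
    define l where "l = a / (a + b)"
    have l: "0 \<le> l" "l \<le> 1" "1 - l = b / (a + b)" using apos by (auto simp: l_def field_simps)
    define SG where "SG = infsum (\<lambda>n. norm (G n) powr p) UNIV"
    define SH where "SH = infsum (\<lambda>n. norm (H n) powr p) UNIV"
    have SG: "SG = a powr p" using lp_norm_pow[OF p0, of G] by (simp add: SG_def a_def)
    have SH: "SH = b powr p" using lp_norm_pow[OF p0, of H] by (simp add: SH_def b_def)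
    define f where "f n = (a + b) powr p * (l * (norm (G n) / a) powr p + (1 - l) * (norm (H n) / b) powr p)" for n
    have pt: "norm (G n + H n) powr p \<le> f n" for n
    proof -
      have eq: "(a + b) * (l * (norm (G n) / a) + (1 - l) * (norm (H n) / b)) = norm (G n) + norm (H n)"
      proof -
        have "a \<noteq> 0" "b \<noteq> 0" "a + b \<noteq> 0" using apos by auto
        then show ?thesis unfolding l(3) unfolding l_def using apos by (simp add: distrib_left)
      qed
      have "norm (G n + H n) \<le> (a + b) * (l * (norm (G n) / a) + (1 - l) * (norm (H n) / b))"
        unfolding eq by (rule norm_triangle_ineq)
      then have "norm (G n + H n) powr p \<le> ((a + b) * (l * (norm (G n) / a) + (1 - l) * (norm (H n) / b))) powr p"
        using p0 by (intro powr_mono2) auto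
      also have "\<dots> = (a + b) powr p * (l * (norm (G n) / a) + (1 - l) * (norm (H n) / b)) powr p"
        by (simp add: powr_mult)
      also have "\<dots> \<le> f n" unfolding f_def
        using apos l p by (intro mult_left_mono powr_convex_nn) auto
      finally show ?thesis .
    qed
    have sG: "(\<lambda>n. norm (G n) powr p) summable_on UNIV" using G by (simp add: lp_space_def)
    have sH: "(\<lambda>n. norm (H n) powr p) summable_on UNIV" using H by (simp add: lp_space_def)
    have fG: "(\<lambda>n. (norm (G n) / a) powr p) = (\<lambda>n. a powr (-p) * norm (G n) powr p)"
      using apos by (intro ext) (simp add: powr_divide powr_minus field_simps)
    have fH: "(\<lambda>n. (norm (H n) / b) powr p) = (\<lambda>n. b powr (-p) * norm (H n) powr p)"
      using apos by (intro ext) (simp add: powr_divide powr_minus field_simps)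
    have s1: "(\<lambda>n. (norm (G n) / a) powr p) summable_on UNIV" unfolding fG
      by (rule summable_on_cmult_right[OF sG])
    have s2: "(\<lambda>n. (norm (H n) / b) powr p) summable_on UNIV" unfolding fH
      by (rule summable_on_cmult_right[OF sH])
    have i1: "infsum (\<lambda>n. (norm (G n) / a) powr p) UNIV = 1" unfolding fG
    proof -
      have "infsum (\<lambda>n. a powr (-p) * norm (G n) powr p) UNIV = a powr (-p) * SG"
        unfolding SG_def by (rule infsum_cmult_right')
      also have "\<dots> = 1" using apos by (simp add: SG powr_add[symmetric])
      finally show "infsum (\<lambda>n. a powr (-p) * norm (G n) powr p) UNIV = 1" .
    qed
    have i2: "infsum (\<lambda>n. (norm (H n) / b) powr p) UNIV = 1" unfolding fH
    proof -
      have "infsum (\<lambda>n. b powr (-p) * norm (H n) powr p) UNIV = b powr (-p) * SH"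
        unfolding SH_def by (rule infsum_cmult_right')
      also have "\<dots> = 1" using apos by (simp add: SH powr_add[symmetric])
      finally show "infsum (\<lambda>n. b powr (-p) * norm (H n) powr p) UNIV = 1" .
    qed
    have sf: "f summable_on UNIV" unfolding f_def
      by (intro summable_on_cmult_right summable_on_add s1 s2)
    have if_: "infsum f UNIV = (a + b) powr p" unfolding f_def
      by (simp add: infsum_cmult_right' infsum_add s1 s2 summable_on_cmult_right i1 i2 infsum_cmult_right'[where c=l] infsum_cmult_right'[where c="1-l"])
    have "infsum (\<lambda>n. norm (G n + H n) powr p) UNIV \<le> infsum f UNIV"
      using lp_space_add[OF G H p0] sf pt by (intro infsum_mono) (auto simp: lp_space_def)
    then have "lp_norm p (\<lambda>n. G n + H n) \<le> ((a + b) powr p) powr (1/p)"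
      unfolding lp_norm_def if_ using p0 by (intro powr_mono2) (auto simp: infsum_nonneg)
    also have "\<dots> = a + b" using apos p0 by (simp add: powr_powr)
    finally show ?thesis by (simp add: a_def b_def)
  qed
qed

lemma lp_triangle_diff:
  assumes "F1 \<in> lp_space p" "F2 \<in> lp_space p" "F3 \<in> lp_space p" "1 \<le> p"
  shows "lp_norm p (\<lambda>n. F1 n - F3 n) \<le> lp_norm p (\<lambda>n. F1 n - F2 n) + lp_norm p (\<lambda>n. F2 n - F3 n)"
proof -
  have "lp_norm p (\<lambda>n. (F1 n - F2 n) + (F2 n - F3 n)) \<le> lp_norm p (\<lambda>n. F1 n - F2 n) + lp_norm p (\<lambda>n. F2 n - F3 n)"
    using assms by (intro lp_minkowski lp_space_diff) auto
  then show ?thesis by simp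
qed

lemma lp_space_shift:
  assumes "G \<in> lp_space p"
  shows "shift k G \<in> lp_space p"
proof -
  have b: "bij_betw (\<lambda>n. n - k) UNIV UNIV"
    by (rule bij_betwI[where g="\<lambda>n. n + k"]) auto
  show ?thesis using assms summable_on_reindex_bij_betw[OF b, of "\<lambda>n. norm (G n) powr p"]
    by (simp add: lp_space_def shift_def)
qed

lemma lp_norm_shift: "lp_norm p (shift k G) = lp_norm p G"
proof -
  have b: "bij_betw (\<lambda>n. n - k) UNIV UNIV"
    by (rule bij_betwI[where g="\<lambda>n. n + k"]) auto
  show ?thesis using infsum_reindex_bij_betw[OF b, of "\<lambda>n. norm (G n) powr p"]
    by (simp add: lp_norm_def shift_def)
qed


lemma lp_norm_le_from_finite:
  assumes "\<And>S. finite S \<Longrightarrow> sum (\<lambda>n. norm (G n) powr p) S \<le> e powr p" "e \<ge> 0" "p > 0"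
  shows "G \<in> lp_space p" "lp_norm p G \<le> e"
proof -
  show "G \<in> lp_space p" using assms lp_space_iff_bounded by blast
  have "infsum (\<lambda>n. norm (G n) powr p) UNIV \<le> e powr p"
    using nn_bounded_summable(2)[of "\<lambda>n. norm (G n) powr p"] assms by auto
  then have "lp_norm p G \<le> (e powr p) powr (1/p)" unfolding lp_norm_def
    using assms by (intro powr_mono2) (auto simp: infsum_nonneg)
  then show "lp_norm p G \<le> e" using assms by (simp add: powr_powr)
qed

lemma finite_le_lp_norm:
  assumes "G \<in> lp_space p" "finite S" "p > 0"
  shows "sum (\<lambda>n. norm (G n) powr p) S \<le> lp_norm p G powr p"
  unfolding lp_norm_pow[OF assms(3)]
  by (rule finite_sum_le_infsum) (use assms in \<open>auto simp: lp_space_def\<close>)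

lemma lp_complete:
  fixes G :: "nat \<Rightarrow> int \<Rightarrow> 'a::banach"
  assumes p: "1 \<le> p" and GL: "\<And>k. G k \<in> lp_space p"
    and C: "\<And>e. e > 0 \<Longrightarrow> \<exists>K. \<forall>k\<ge>K. \<forall>l\<ge>K. lp_norm p (\<lambda>n. G k n - G l n) < e"
  shows "\<exists>H \<in> lp_space p. (\<lambda>k. lp_norm p (\<lambda>n. G k n - H n)) \<longlonglongrightarrow> 0"
proof -
  have p0: "p > 0" using p by auto
  have cau: "Cauchy (\<lambda>k. G k n)" for n
  proof (rule metric_CauchyI)
    fix e :: real assume "e > 0"
    then obtain K where K: "\<forall>k\<ge>K. \<forall>l\<ge>K. lp_norm p (\<lambda>n. G k n - G l n) < e" using C by blast
    have "dist (G k n) (G l n) < e" if "k \<ge> K" "l \<ge> K" for k l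
    proof -
      have "norm (G k n - G l n) \<le> lp_norm p (\<lambda>n. G k n - G l n)"
        using pointwise_le_lp_norm[OF lp_space_diff[OF GL GL p0] p0] by blast
      moreover have "lp_norm p (\<lambda>n. G k n - G l n) < e" using K that by blast
      ultimately show ?thesis by (simp add: dist_norm)
    qed
    then show "\<exists>M. \<forall>m\<ge>M. \<forall>l\<ge>M. dist (G m n) (G l n) < e" by blast
  qed
  define H where "H n = lim (\<lambda>k. G k n)" for n
  have lim: "(\<lambda>k. G k n) \<longlonglongrightarrow> H n" for n
    using cau[of n] unfolding H_def by (simp add: Cauchy_convergent_iff convergent_LIMSEQ_iff)
  have bound: "lp_norm p (\<lambda>n. G k n - H n) \<le> e \<and> (\<lambda>n. G k n - H n) \<in> lp_space p"
    if "e > 0" "k \<ge> K" "\<forall>k\<ge>K. \<forall>l\<ge>K. lp_norm p (\<lambda>n. G k n - G l n) < e" for e k K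
  proof -
    have "sum (\<lambda>n. norm (G k n - H n) powr p) S \<le> e powr p" if S: "finite S" for S
    proof (rule LIMSEQ_le_const2)
      show "(\<lambda>l. sum (\<lambda>n. norm (G k n - G l n) powr p) S) \<longlonglongrightarrow> sum (\<lambda>n. norm (G k n - H n) powr p) S"
        using p0 by (intro tendsto_intros lim) auto
      show "\<exists>N. \<forall>l\<ge>N. sum (\<lambda>n. norm (G k n - G l n) powr p) S \<le> e powr p"
      proof (intro exI allI impI)
        fix l assume "l \<ge> K"
        have "sum (\<lambda>n. norm (G k n - G l n) powr p) S \<le> lp_norm p (\<lambda>n. G k n - G l n) powr p"
          by (rule finite_le_lp_norm[OF lp_space_diff[OF GL GL p0] S p0])
        also have "\<dots> \<le> e powr p" using \<open>e > 0\<close> p0 \<open>l \<ge> K\<close> \<open>k \<ge> K\<close> \<open>\<forall>k\<ge>K. \<forall>l\<ge>K. lp_norm p (\<lambda>n. G k n - G l n) < e\<close>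
          by (intro powr_mono2) (auto simp: lp_norm_nonneg less_imp_le)
        finally show "sum (\<lambda>n. norm (G k n - G l n) powr p) S \<le> e powr p" .
      qed
    qed
    then show ?thesis using lp_norm_le_from_finite[of "\<lambda>n. G k n - H n" p e] that p0 by auto
  qed
  obtain K1 where K1: "\<forall>k\<ge>K1. \<forall>l\<ge>K1. lp_norm p (\<lambda>n. G k n - G l n) < 1" using C[of 1] by auto
  have "(\<lambda>n. G K1 n - H n) \<in> lp_space p" using bound[of 1 K1 K1] K1 by auto
  then have "(\<lambda>n. G K1 n - (G K1 n - H n)) \<in> lp_space p" using lp_space_diff[OF GL _ p0] by blast
  then have HL: "H \<in> lp_space p" by simp
  have "(\<lambda>k. lp_norm p (\<lambda>n. G k n - H n)) \<longlonglongrightarrow> 0"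
  proof (rule LIMSEQ_I)
    fix r :: real assume "r > 0"
    then obtain K where K: "\<forall>k\<ge>K. \<forall>l\<ge>K. lp_norm p (\<lambda>n. G k n - G l n) < r/2" using C[of "r/2"] by auto
    have "norm (lp_norm p (\<lambda>n. G k n - H n)) < r" if "k \<ge> K" for k
      using bound[of "r/2" K k] K that \<open>r > 0\<close> by (simp add: lp_norm_nonneg)
    then show "\<exists>no. \<forall>n\<ge>no. norm (lp_norm p (\<lambda>na. G n na - H na) - 0) < r" by auto
  qed
  then show ?thesis using HL by blast
qed


definition lpd :: "real \<Rightarrow> (int \<Rightarrow> 'a::real_normed_vector) \<Rightarrow> (int \<Rightarrow> 'a) \<Rightarrow> real" where
  "lpd p G H = lp_norm p (\<lambda>n. G n - H n)"

lemma lp_metric: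
  fixes p :: real
  assumes p: "1 \<le> p"
  shows "Metric_space (lp_space p :: (int \<Rightarrow> 'a::banach) set) (lpd p)"
proof
  have p0: "p > 0" using p by auto
  fix x y z :: "int \<Rightarrow> 'a"
  show "0 \<le> lpd p x y" by (simp add: lpd_def lp_norm_nonneg)
  show "lpd p x y = lpd p y x" unfolding lpd_def by (rule lp_norm_commute)
  show "x \<in> lp_space p \<Longrightarrow> y \<in> lp_space p \<Longrightarrow> (lpd p x y = 0) = (x = y)"
    unfolding lpd_def using lp_norm_zero_iff[OF lp_space_diff[of x p y] p0] p0
    by (auto simp: fun_eq_iff)
  show "x \<in> lp_space p \<Longrightarrow> y \<in> lp_space p \<Longrightarrow> z \<in> lp_space p \<Longrightarrow> lpd p x z \<le> lpd p x y + lpd p y z"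
    unfolding lpd_def using lp_triangle_diff p by blast
qed

lemma lp_mcomplete:
  fixes p :: real
  assumes p: "1 \<le> p"
  shows "Metric_space.mcomplete (lp_space p :: (int \<Rightarrow> 'a::banach) set) (lpd p)"
proof -
  interpret Metric_space "lp_space p :: (int \<Rightarrow> 'a::banach) set" "lpd p" by (rule lp_metric[OF p])
  show ?thesis unfolding mcomplete_def
  proof (intro allI impI)
    fix \<sigma> :: "nat \<Rightarrow> int \<Rightarrow> 'a" assume "MCauchy \<sigma>"
    then have L: "\<And>k. \<sigma> k \<in> lp_space p" and C: "\<And>e. e > 0 \<Longrightarrow> \<exists>K. \<forall>k\<ge>K. \<forall>l\<ge>K. lp_norm p (\<lambda>n. \<sigma> k n - \<sigma> l n) < e"
      unfolding MCauchy_def lpd_def by auto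
    obtain H where H: "H \<in> lp_space p" "(\<lambda>k. lp_norm p (\<lambda>n. \<sigma> k n - H n)) \<longlonglongrightarrow> 0"
      using lp_complete[OF p L C] by blast
    have "limitin mtopology \<sigma> H sequentially"
      unfolding limit_metric_sequentially
    proof (intro conjI allI impI H(1))
      fix e :: real assume "e > 0"
      then obtain N where "\<forall>k\<ge>N. norm (lp_norm p (\<lambda>n. \<sigma> k n - H n) - 0) < e"
        using LIMSEQ_D[OF H(2)] by blast
      then show "\<exists>N. \<forall>n\<ge>N. \<sigma> n \<in> lp_space p \<and> lpd p (\<sigma> n) H < e"
        using L by (auto simp: lpd_def abs_less_iff)
    qed
    then show "\<exists>x. limitin mtopology \<sigma> x sequentially" by blast
  qed
qed

lemma lp_baire:
  fixes E :: "nat \<Rightarrow> (int \<Rightarrow> 'a::banach) set"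
  assumes p: "1 \<le> p" and EL: "\<And>m. E m \<subseteq> lp_space p" and cover: "\<And>G. G \<in> lp_space p \<Longrightarrow> \<exists>m. G \<in> E m"
  shows "\<exists>m G0 r. G0 \<in> lp_space p \<and> r > 0 \<and>
     (\<forall>G\<in>lp_space p. lp_norm p (\<lambda>n. G n - G0 n) < r \<longrightarrow> (\<forall>e>0. \<exists>H\<in>E m. lp_norm p (\<lambda>n. G n - H n) < e))"
proof -
  interpret Metric_space "lp_space p :: (int \<Rightarrow> 'a::banach) set" "lpd p" by (rule lp_metric[OF p])
  have mc: mcomplete using lp_mcomplete[OF p] .
  define \<G> where "\<G> = range (\<lambda>m. mtopology closure_of E m)"
  have "\<exists>T\<in>\<G>. mtopology interior_of T \<noteq> {}"
  proof (rule ccontr)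
    assume "\<not> ?thesis"
    then have "mtopology interior_of \<Union>\<G> = {}"
      by (intro metric_Baire_category_alt mc) (auto simp: \<G>_def)
    moreover have "\<Union>\<G> = lp_space p"
    proof
      show "\<Union>\<G> \<subseteq> lp_space p" unfolding \<G>_def using closure_of_subset_topspace by fastforce
      show "lp_space p \<subseteq> \<Union>\<G>"
      proof
        fix G :: "int \<Rightarrow> 'a" assume "G \<in> lp_space p"
        then obtain m where "G \<in> E m" using cover by blast
        then have "G \<in> mtopology closure_of E m" using closure_of_subset EL by (metis subsetD topspace_mtopology)
        then show "G \<in> \<Union>\<G>" unfolding \<G>_def by blast
      qed
    qed
    ultimately show False using lp_space_zero[of p] by (metis empty_iff interior_of_topspace topspace_mtopology)
  qed
  then obtain m where "mtopology interior_of (mtopology closure_of E m) \<noteq> {}" unfolding \<G>_def by auto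
  then obtain G0 r where G0: "G0 \<in> lp_space p" "r > 0" "mball G0 r \<subseteq> mtopology closure_of E m"
    unfolding metric_interior_of by blast
  have "\<forall>e>0. \<exists>H\<in>E m. lp_norm p (\<lambda>n. G n - H n) < e"
    if "G \<in> lp_space p" "lp_norm p (\<lambda>n. G n - G0 n) < r" for G
  proof -
    have "G \<in> mball G0 r" using that G0 lp_norm_commute[of p G0 G] by (auto simp: lpd_def)
    then have "G \<in> mtopology closure_of E m" using G0 by blast
    then show ?thesis unfolding metric_closure_of by (auto simp: lpd_def)
  qed
  then show ?thesis using G0 by blast
qed


lemma geom_bound: "(\<Sum>j<N. c / 2 ^ j) = 2 * c - 2 * c / 2 ^ N" for c :: real
  by (induction N) (auto simp: field_simps)

lemma zabreiko:
  fixes M :: "(int \<Rightarrow> 'a::banach) \<Rightarrow> real" and p :: real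
  assumes p: "1 \<le> p"
    and Mnn: "\<And>G. G \<in> lp_space p \<Longrightarrow> M G \<ge> 0"
    and Msc: "\<And>G c. G \<in> lp_space p \<Longrightarrow> M (\<lambda>n. c *\<^sub>R G n) = \<bar>c\<bar> * M G"
    and Madd: "\<And>G H. G \<in> lp_space p \<Longrightarrow> H \<in> lp_space p \<Longrightarrow> M (\<lambda>n. G n + H n) \<le> M G + M H"
    and Mser: "\<And>x y B. (\<And>k. y k \<in> lp_space p) \<Longrightarrow> x \<in> lp_space p \<Longrightarrow>
        (\<lambda>N. lp_norm p (\<lambda>n. x n - (\<Sum>k<N. y k n))) \<longlonglongrightarrow> 0 \<Longrightarrow> (\<And>N. (\<Sum>k<N. M (y k)) \<le> B) \<Longrightarrow> M x \<le> B"
  shows "\<exists>C. \<forall>G\<in>lp_space p. M G \<le> C * lp_norm p G"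
proof -
  have p0: "p > 0" using p by auto
  define E where "E m = {G \<in> lp_space p. M G \<le> real m}" for m :: nat
  have cover: "\<exists>m. G \<in> E m" if "G \<in> lp_space p" for G
    using that by (auto simp: E_def intro!: exI[of _ "nat \<lceil>M G\<rceil>"] real_nat_ceiling_ge)
  have EL: "\<And>m. E m \<subseteq> lp_space p" by (auto simp: E_def)
  obtain m G0 r where G0: "G0 \<in> lp_space p" "r > 0"
    and B: "\<And>G. G \<in> lp_space p \<Longrightarrow> lp_norm p (\<lambda>n. G n - G0 n) < r \<Longrightarrow> (\<forall>e>0. \<exists>H\<in>E m. lp_norm p (\<lambda>n. G n - H n) < e)"
    using lp_baire[OF p EL cover] by blast
  have Mminus: "M (\<lambda>n. - G n) = M G" if "G \<in> lp_space p" for G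
    using Msc[OF that, of "-1"] by simp
  have step1: "\<exists>z\<in>lp_space p. M z \<le> 2 * m \<and> lp_norm p (\<lambda>n. y n - z n) < e"
    if y: "y \<in> lp_space p" "lp_norm p y < r" and e: "e > 0" for y e
  proof -
    have GL: "(\<lambda>n. G0 n + y n) \<in> lp_space p" by (rule lp_space_add[OF G0(1) y(1) p0])
    have d1: "lp_norm p (\<lambda>n. (G0 n + y n) - G0 n) < r" using y by simp
    have d2: "lp_norm p (\<lambda>n. G0 n - G0 n) < r" using G0 by (simp add: lp_norm_def)
    have e2: "e/2 > 0" using e by simp
    obtain u where u: "u \<in> E m" "lp_norm p (\<lambda>n. (G0 n + y n) - u n) < e/2"
      using B[OF GL d1] e2 by blast
    obtain v where v: "v \<in> E m" "lp_norm p (\<lambda>n. G0 n - v n) < e/2"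
      using B[OF G0(1) d2] e2 by blast
    have uL: "u \<in> lp_space p" and vL: "v \<in> lp_space p" using u v by (auto simp: E_def)
    define z where "z = (\<lambda>n. u n - v n)"
    have zL: "z \<in> lp_space p" unfolding z_def by (rule lp_space_diff[OF uL vL p0])
    have "M z \<le> M u + M (\<lambda>n. - v n)" unfolding z_def using Madd[OF uL lp_space_minus[OF vL]] by simp
    also have "\<dots> \<le> 2 * m" using u v Mminus[OF vL] by (auto simp: E_def)
    finally have Mz: "M z \<le> 2 * m" .
    have "lp_norm p (\<lambda>n. ((G0 n + y n) - u n) + (- (G0 n - v n))) \<le>
        lp_norm p (\<lambda>n. (G0 n + y n) - u n) + lp_norm p (\<lambda>n. - (G0 n - v n))"
      by (intro lp_minkowski p lp_space_diff lp_space_minus GL uL vL G0 p0)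
    also have "\<dots> < e" using u v by (simp add: lp_norm_minus[of p "\<lambda>n. G0 n - v n", simplified])
    finally have "lp_norm p (\<lambda>n. y n - z n) < e" unfolding z_def by (simp add: algebra_simps)
    then show ?thesis using zL Mz by blast
  qed
  have step2: "\<exists>z\<in>lp_space p. M z \<le> 2 * real m * t \<and> lp_norm p (\<lambda>n. y n - z n) < e"
    if y: "y \<in> lp_space p" "lp_norm p y < r * t" and t: "t > 0" and e: "e > 0" for y e and t :: real
  proof -
    have y': "(\<lambda>n. (1/t) *\<^sub>R y n) \<in> lp_space p" by (rule lp_space_scale[OF y(1)])
    have "lp_norm p (\<lambda>n. (1/t) *\<^sub>R y n) < r" using y t
      by (simp add: lp_norm_scale[OF p0] pos_divide_less_eq)
    then obtain z where z: "z \<in> lp_space p" "M z \<le> 2 * m" "lp_norm p (\<lambda>n. (1/t) *\<^sub>R y n - z n) < e / t"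
      using step1[OF y'] e t by (meson divide_pos_pos)
    have "lp_norm p (\<lambda>n. y n - t *\<^sub>R z n) = lp_norm p (\<lambda>n. t *\<^sub>R ((1/t) *\<^sub>R y n - z n))"
      using t by (simp add: algebra_simps)
    also have "\<dots> = t * lp_norm p (\<lambda>n. (1/t) *\<^sub>R y n - z n)" using t by (simp add: lp_norm_scale[OF p0])
    also have "\<dots> < e" using z t by (simp add: field_simps)
    finally show ?thesis using z t Msc[OF z(1), of t]
      by (intro bexI[of _ "\<lambda>n. t *\<^sub>R z n"]) (auto simp: lp_space_scale mult.commute)
  qed
  have step3: "M y \<le> 4 * m" if y: "y \<in> lp_space p" "lp_norm p y < r" for y
  proof -
    have "\<forall>k w. \<exists>z. w \<in> lp_space p \<and> lp_norm p w < r / 2^k \<longrightarrow>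
        z \<in> lp_space p \<and> M z \<le> 2 * m / 2^k \<and> lp_norm p (\<lambda>n. w n - z n) < r / 2^(k+1)"
    proof (intro allI)
      fix k :: nat and w
      show "\<exists>z. w \<in> lp_space p \<and> lp_norm p w < r / 2^k \<longrightarrow>
        z \<in> lp_space p \<and> M z \<le> 2 * m / 2^k \<and> lp_norm p (\<lambda>n. w n - z n) < r / 2^(k+1)"
        using step2[of w "1/2^k" "r / 2^(k+1)"] G0(2) by (auto simp: field_simps)
    qed
    then obtain Z where Z: "\<And>k w. w \<in> lp_space p \<Longrightarrow> lp_norm p w < r / 2^k \<Longrightarrow>
        Z k w \<in> lp_space p \<and> M (Z k w) \<le> 2 * m / 2^k \<and> lp_norm p (\<lambda>n. w n - Z k w n) < r / 2^(k+1)"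
      by metis
    define W where "W = rec_nat y (\<lambda>k w. (\<lambda>n. w n - Z k w n))"
    have W0: "W 0 = y" and WS: "W (Suc k) = (\<lambda>n. W k n - Z k (W k) n)" for k
      by (simp_all add: W_def)
    have inv: "W k \<in> lp_space p \<and> lp_norm p (W k) < r / 2^k \<and> W k = (\<lambda>n. y n - (\<Sum>j<k. Z j (W j) n))" for k
    proof (induction k)
      case 0 then show ?case using y W0 by simp
    next
      case (Suc k)
      then have Zk: "Z k (W k) \<in> lp_space p" "lp_norm p (\<lambda>n. W k n - Z k (W k) n) < r / 2^(k+1)"
        using Z by blast+
      have "W (Suc k) \<in> lp_space p" unfolding WS using Suc Zk by (intro lp_space_diff p0) auto
      moreover have "lp_norm p (W (Suc k)) < r / 2 ^ Suc k" unfolding WS using Zk by simp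
      moreover have "W (Suc k) = (\<lambda>n. y n - (\<Sum>j<Suc k. Z j (W j) n))"
        unfolding WS using Suc by (subst (1) Suc.IH[THEN conjunct2, THEN conjunct2]) (auto simp: algebra_simps)
      ultimately show ?case by blast
    qed
    have ZL: "Z k (W k) \<in> lp_space p" and ZM: "M (Z k (W k)) \<le> 2 * m / 2^k" for k
      using Z inv by blast+
    show ?thesis
    proof (rule Mser[of "\<lambda>k. Z k (W k)" y])
      show "Z k (W k) \<in> lp_space p" for k by (rule ZL)
      show "y \<in> lp_space p" by (rule y)
      show "(\<lambda>N. lp_norm p (\<lambda>n. y n - (\<Sum>k<N. Z k (W k) n))) \<longlonglongrightarrow> 0"
      proof (rule tendsto_sandwich[of "\<lambda>N. 0" _ _ "\<lambda>N. r / 2^N"])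
        show "\<forall>\<^sub>F N in sequentially. 0 \<le> lp_norm p (\<lambda>n. y n - (\<Sum>k<N. Z k (W k) n))"
          by (simp add: lp_norm_nonneg)
        show "\<forall>\<^sub>F N in sequentially. lp_norm p (\<lambda>n. y n - (\<Sum>k<N. Z k (W k) n)) \<le> r / 2^N"
          using inv by (intro always_eventually allI) (metis less_imp_le)
        show "(\<lambda>N. 0) \<longlonglongrightarrow> (0::real)" by simp
        show "(\<lambda>N. r / 2^N) \<longlonglongrightarrow> (0::real)"
          by (intro LIMSEQ_divide_realpow_zero) auto
      qed
      show "(\<Sum>k<N. M (Z k (W k))) \<le> 4 * m" for N
      proof -
        have "(\<Sum>k<N. M (Z k (W k))) \<le> (\<Sum>k<N. 2 * m / 2^k)" by (intro sum_mono ZM)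
        also have "\<dots> = 4 * m - 4 * m / 2^N" by (simp add: geom_bound)
        also have "\<dots> \<le> 4 * m" by simp
        finally show ?thesis .
      qed
    qed
  qed
  have "M G \<le> (8 * m / r) * lp_norm p G" if G: "G \<in> lp_space p" for G
  proof (cases "lp_norm p G = 0")
    case True
    then have "G = (\<lambda>n. 0)" using lp_norm_zero_iff[OF G p0] by simp
    then have "M G = 0" using Msc[OF G, of 0] by simp
    then show ?thesis using True by simp
  next
    case False
    define t where "t = lp_norm p G"
    have t: "t > 0" using False lp_norm_nonneg[of p G] by (simp add: t_def)
    have "lp_norm p (\<lambda>n. (r / (2 * t)) *\<^sub>R G n) = r / 2"
      using t G0(2) by (simp add: lp_norm_scale[OF p0] t_def[symmetric])
    then have "M (\<lambda>n. (r / (2 * t)) *\<^sub>R G n) \<le> 4 * m"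
      using G0(2) by (intro step3 lp_space_scale G) auto
    then have "r / (2 * t) * M G \<le> 4 * m" using Msc[OF G, of "r / (2*t)"] t G0(2) by simp
    then show ?thesis using t G0(2) unfolding t_def[symmetric] by (simp add: field_simps)
  qed
  then show ?thesis by blast
qed


lemma lp_space_sum:
  assumes "finite S" "\<And>i. i \<in> S \<Longrightarrow> g i \<in> lp_space p" "p > 0"
  shows "(\<lambda>n. \<Sum>i\<in>S. g i n) \<in> lp_space p"
  using assms
proof (induction S rule: finite_induct)
  case empty then show ?case by (simp add: lp_space_zero)
next
  case (insert x F)
  then show ?case by (simp add: lp_space_add)
qed

lemma lp_norm_sum_le:
  assumes "finite S" "\<And>i. i \<in> S \<Longrightarrow> g i \<in> lp_space p" "1 \<le> p"
  shows "lp_norm p (\<lambda>n. \<Sum>i\<in>S. g i n) \<le> (\<Sum>i\<in>S. lp_norm p (g i))"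
  using assms
proof (induction S rule: finite_induct)
  case empty then show ?case by (simp add: lp_norm_def)
next
  case (insert x F)
  have "lp_norm p (\<lambda>n. g x n + (\<Sum>i\<in>F. g i n)) \<le> lp_norm p (g x) + lp_norm p (\<lambda>n. \<Sum>i\<in>F. g i n)"
    using insert by (intro lp_minkowski lp_space_sum) auto
  then show ?case using insert by simp
qed

lemma le_of_tendsto_plus:
  fixes x B :: real
  assumes "\<And>K. x \<le> f K + B" "f \<longlonglongrightarrow> 0"
  shows "x \<le> B"
proof -
  have "(\<lambda>K. f K + B) \<longlonglongrightarrow> 0 + B" by (intro tendsto_intros assms)
  then show ?thesis using assms(1) by (intro LIMSEQ_le_const[of "\<lambda>K. f K + B"]) auto
qed

locale SB =
  fixes p :: real and F :: "int \<Rightarrow> 'a::banach" and \<sigma> :: "nat \<Rightarrow> int"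
  assumes p: "1 \<le> p" and FL: "F \<in> lp_space p" and bij: "bij \<sigma>"
    and basis: "lp_schauder_basis p (\<lambda>i. shift (\<sigma> i) F)"
begin

definition e where "e i = shift (\<sigma> i) F"
definition PS where "PS a N = (\<lambda>k. \<Sum>i<N. a i *\<^sub>R e i k)"
definition coef where "coef G = (THE a. lp_expansion p e a G)"

lemma p0: "p > 0" using p by auto

lemma eL: "e i \<in> lp_space p" unfolding e_def by (rule lp_space_shift[OF FL])

lemma e_norm: "lp_norm p (e i) = lp_norm p F" unfolding e_def by (rule lp_norm_shift)

lemma PS_L: "PS a N \<in> lp_space p"
  unfolding PS_def by (intro lp_space_sum lp_space_scale eL p0) auto

lemma exp_iff: "lp_expansion p e a G \<longleftrightarrow> (\<lambda>N. lp_norm p (\<lambda>n. G n - PS a N n)) \<longlonglongrightarrow> 0"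
  unfolding lp_expansion_def PS_def ..

lemma ex1: "G \<in> lp_space p \<Longrightarrow> \<exists>!a. lp_expansion p e a G"
  using basis unfolding lp_schauder_basis_def e_def[abs_def] by blast

lemma coef_exp: assumes "G \<in> lp_space p" shows "lp_expansion p e (coef G) G"
  unfolding coef_def using ex1[OF assms] by (rule theI')

lemma coef_eq: "G \<in> lp_space p \<Longrightarrow> lp_expansion p e a G \<Longrightarrow> coef G = a"
  unfolding coef_def by (rule the1_equality[OF ex1])

lemma PS_add: "PS (\<lambda>i. a i + b i) N = (\<lambda>n. PS a N n + PS b N n)"
  by (simp add: PS_def scaleR_add_left sum.distrib)

lemma PS_scale: "PS (\<lambda>i. c * a i) N = (\<lambda>n. c *\<^sub>R PS a N n)"
  by (simp add: PS_def scaleR_sum_right)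

lemma PS_diff: "PS (\<lambda>i. a i - b i) N = (\<lambda>n. PS a N n - PS b N n)"
  by (simp add: PS_def scaleR_diff_left sum_subtractf)

lemma PS_sum: "PS (\<lambda>i. \<Sum>k\<in>S. a k i) N = (\<lambda>n. \<Sum>k\<in>S. PS (a k) N n)"
  unfolding PS_def by (rule ext) (simp add: scaleR_sum_left sum.swap[of _ S])

lemma squeeze0:
  fixes f g :: "nat \<Rightarrow> real"
  assumes "\<And>N. 0 \<le> f N" "\<And>N. f N \<le> g N" "g \<longlonglongrightarrow> 0"
  shows "f \<longlonglongrightarrow> 0"
  by (rule tendsto_sandwich[of "\<lambda>N. 0" _ _ g]) (use assms in auto)

lemma exp_add:
  assumes "G \<in> lp_space p" "H \<in> lp_space p" "lp_expansion p e a G" "lp_expansion p e b H"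
  shows "lp_expansion p e (\<lambda>i. a i + b i) (\<lambda>n. G n + H n)"
  unfolding exp_iff PS_add
proof (rule squeeze0)
  show "\<And>N. 0 \<le> lp_norm p (\<lambda>n. G n + H n - (PS a N n + PS b N n))" by (rule lp_norm_nonneg)
  show "lp_norm p (\<lambda>n. G n + H n - (PS a N n + PS b N n)) \<le>
      lp_norm p (\<lambda>n. G n - PS a N n) + lp_norm p (\<lambda>n. H n - PS b N n)" for N
  proof -
    have "lp_norm p (\<lambda>n. (G n - PS a N n) + (H n - PS b N n)) \<le>
      lp_norm p (\<lambda>n. G n - PS a N n) + lp_norm p (\<lambda>n. H n - PS b N n)"
      using assms by (intro lp_minkowski lp_space_diff PS_L p0 p)
    then show ?thesis by (simp add: algebra_simps)
  qed
  show "(\<lambda>N. lp_norm p (\<lambda>n. G n - PS a N n) + lp_norm p (\<lambda>n. H n - PS b N n)) \<longlonglongrightarrow> 0"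
    using tendsto_add[OF assms(3,4)[unfolded exp_iff]] by simp
qed

lemma exp_scale:
  assumes "lp_expansion p e a G"
  shows "lp_expansion p e (\<lambda>i. c * a i) (\<lambda>n. c *\<^sub>R G n)"
proof -
  have "(\<lambda>N. \<bar>c\<bar> * lp_norm p (\<lambda>n. G n - PS a N n)) \<longlonglongrightarrow> \<bar>c\<bar> * 0"
    using assms unfolding exp_iff by (intro tendsto_intros)
  moreover have "lp_norm p (\<lambda>n. c *\<^sub>R G n - PS (\<lambda>i. c * a i) N n) = \<bar>c\<bar> * lp_norm p (\<lambda>n. G n - PS a N n)" for N
    unfolding PS_scale using lp_norm_scale[OF p0, of c "\<lambda>n. G n - PS a N n"]
    by (simp add: scaleR_diff_right)
  ultimately show ?thesis unfolding exp_iff by simp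
qed

lemma coef_add: "G \<in> lp_space p \<Longrightarrow> H \<in> lp_space p \<Longrightarrow> coef (\<lambda>n. G n + H n) = (\<lambda>i. coef G i + coef H i)"
  by (rule coef_eq[OF lp_space_add[OF _ _ p0] exp_add[OF _ _ coef_exp coef_exp]])

lemma coef_scale: "G \<in> lp_space p \<Longrightarrow> coef (\<lambda>n. c *\<^sub>R G n) = (\<lambda>i. c * coef G i)"
  by (rule coef_eq[OF lp_space_scale exp_scale[OF coef_exp]])

lemma coef_diff: "G \<in> lp_space p \<Longrightarrow> H \<in> lp_space p \<Longrightarrow> coef (\<lambda>n. G n - H n) = (\<lambda>i. coef G i - coef H i)"
  using coef_add[of G "\<lambda>n. (-1) *\<^sub>R H n"] coef_scale[of H "-1"] lp_space_scale[of H p "-1"]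
  by simp

lemma coef_sum:
  assumes "finite S" "\<And>k. k \<in> S \<Longrightarrow> y k \<in> lp_space p"
  shows "coef (\<lambda>n. \<Sum>k\<in>S. y k n) = (\<lambda>i. \<Sum>k\<in>S. coef (y k) i)"
  using assms
proof (induction S rule: finite_induct)
  case empty
  have "coef (\<lambda>n. 0) = (\<lambda>i. 0 * coef (\<lambda>n. 0) i)"
    using coef_scale[OF lp_space_zero, of 0] by simp
  then show ?case by simp
next
  case (insert x F)
  then show ?case by (simp add: coef_add lp_space_sum p0)
qed

lemma coef_PS_bound: "\<bar>a i\<bar> * lp_norm p F \<le> lp_norm p (PS a (Suc i)) + lp_norm p (PS a i)"
proof -
  have eq: "(\<lambda>n. a i *\<^sub>R e i n) = (\<lambda>n. PS a (Suc i) n - PS a i n)" by (simp add: PS_def)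
  have "\<bar>a i\<bar> * lp_norm p F = lp_norm p (\<lambda>n. a i *\<^sub>R e i n)"
    using lp_norm_scale[OF p0, of "a i" "e i"] e_norm by simp
  also have "\<dots> = lp_norm p (\<lambda>n. PS a (Suc i) n + - PS a i n)" unfolding eq by simp
  also have "\<dots> \<le> lp_norm p (PS a (Suc i)) + lp_norm p (\<lambda>n. - PS a i n)"
    by (intro lp_minkowski p PS_L lp_space_minus)
  also have "\<dots> = lp_norm p (PS a (Suc i)) + lp_norm p (PS a i)" by (simp add: lp_norm_minus)
  finally show ?thesis .
qed

lemma PS_diff_bound:
  "lp_norm p (\<lambda>n. PS a N n - PS b N n) \<le> (\<Sum>i<N. \<bar>a i - b i\<bar>) * lp_norm p F"
proof -
  have "lp_norm p (\<lambda>n. PS a N n - PS b N n) = lp_norm p (\<lambda>n. \<Sum>i<N. (a i - b i) *\<^sub>R e i n)"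
    by (simp add: PS_def scaleR_diff_left sum_subtractf)
  also have "\<dots> \<le> (\<Sum>i<N. lp_norm p (\<lambda>n. (a i - b i) *\<^sub>R e i n))"
    by (intro lp_norm_sum_le lp_space_scale eL p) auto
  also have "\<dots> = (\<Sum>i<N. \<bar>a i - b i\<bar>) * lp_norm p F"
    by (simp add: lp_norm_scale[OF p0] e_norm sum_distrib_right)
  finally show ?thesis .
qed

lemma F_nonzero: "lp_norm p F > 0"
proof (rule ccontr)
  assume "\<not> ?thesis"
  then have "lp_norm p F = 0" using lp_norm_nonneg[of p F] by linarith
  then have "F = (\<lambda>n. 0)" using lp_norm_zero_iff[OF FL p0] by simp
  then have F0: "F m = 0" for m by simp
  have "e i = (\<lambda>n. 0)" for i by (simp add: e_def shift_def F0)
  then have "lp_expansion p e a (\<lambda>n. 0)" for a by (simp add: exp_iff PS_def lp_norm_def)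
  moreover obtain a0 where "\<And>a. lp_expansion p e a (\<lambda>n. 0) \<Longrightarrow> a = a0"
    using ex1[OF lp_space_zero] by blast
  ultimately have "(\<lambda>i::nat. 0::real) = a0" "(\<lambda>i::nat. 1::real) = a0" by blast+
  then have "(\<lambda>i::nat. 0::real) = (\<lambda>i. 1)" by simp
  then show False by (metis zero_neq_one)
qed

end


context SB begin

definition tnorm where "tnorm G = (SUP N. lp_norm p (PS (coef G) N))"

lemma lp_norm_tri3:
  assumes "X \<in> lp_space p" "Y \<in> lp_space p"
  shows "lp_norm p X \<le> lp_norm p (\<lambda>n. X n - Y n) + lp_norm p Y"
proof -
  have "lp_norm p (\<lambda>n. (X n - Y n) + Y n) \<le> lp_norm p (\<lambda>n. X n - Y n) + lp_norm p Y"
    using assms by (intro lp_minkowski lp_space_diff p p0)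
  then show ?thesis by simp
qed

lemma PS_bdd:
  assumes G: "G \<in> lp_space p"
  shows "bdd_above (range (\<lambda>N. lp_norm p (PS (coef G) N)))"
proof -
  have "(\<lambda>N. lp_norm p (\<lambda>n. G n - PS (coef G) N n)) \<longlonglongrightarrow> 0"
    using coef_exp[OF G] unfolding exp_iff .
  then have "Bseq (\<lambda>N. lp_norm p (\<lambda>n. G n - PS (coef G) N n))" by (intro convergent_imp_Bseq convergentI)
  then obtain K where K: "\<And>N. norm (lp_norm p (\<lambda>n. G n - PS (coef G) N n)) \<le> K"
    unfolding Bseq_def by blast
  have "lp_norm p (PS (coef G) N) \<le> lp_norm p G + K" for N
  proof -
    have "lp_norm p (PS (coef G) N) \<le> lp_norm p (\<lambda>n. PS (coef G) N n - G n) + lp_norm p G"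
      by (rule lp_norm_tri3[OF PS_L G])
    also have "\<dots> \<le> K + lp_norm p G" using K[of N] by (simp add: lp_norm_commute)
    finally show ?thesis by simp
  qed
  then show ?thesis by (intro bdd_aboveI2) auto
qed

lemma tnorm_ge: "G \<in> lp_space p \<Longrightarrow> lp_norm p (PS (coef G) N) \<le> tnorm G"
  unfolding tnorm_def by (rule cSUP_upper[OF _ PS_bdd]) auto

lemma tnorm_le: "(\<And>N. lp_norm p (PS (coef G) N) \<le> B) \<Longrightarrow> tnorm G \<le> B"
  unfolding tnorm_def by (rule cSUP_least) auto

lemma tnorm_nonneg: "G \<in> lp_space p \<Longrightarrow> tnorm G \<ge> 0"
  using tnorm_ge[of G 0] lp_norm_nonneg[of p] by (meson order_trans)

lemma tnorm_scale_le: "G \<in> lp_space p \<Longrightarrow> tnorm (\<lambda>n. c *\<^sub>R G n) \<le> \<bar>c\<bar> * tnorm G"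
proof (rule tnorm_le)
  fix N assume G: "G \<in> lp_space p"
  have "lp_norm p (PS (coef (\<lambda>n. c *\<^sub>R G n)) N) = \<bar>c\<bar> * lp_norm p (PS (coef G) N)"
    unfolding coef_scale[OF G] PS_scale by (rule lp_norm_scale[OF p0])
  also have "\<dots> \<le> \<bar>c\<bar> * tnorm G" by (intro mult_left_mono tnorm_ge G) auto
  finally show "lp_norm p (PS (coef (\<lambda>n. c *\<^sub>R G n)) N) \<le> \<bar>c\<bar> * tnorm G" .
qed

lemma tnorm_scale: assumes G: "G \<in> lp_space p" shows "tnorm (\<lambda>n. c *\<^sub>R G n) = \<bar>c\<bar> * tnorm G"
proof (cases "c = 0")
  case True
  then show ?thesis using tnorm_scale_le[OF G, of 0] tnorm_nonneg[OF lp_space_scale[OF G, of 0]] by simp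
next
  case False
  have "tnorm (\<lambda>n. (1/c) *\<^sub>R (c *\<^sub>R G n)) \<le> \<bar>1/c\<bar> * tnorm (\<lambda>n. c *\<^sub>R G n)"
    by (rule tnorm_scale_le[OF lp_space_scale[OF G]])
  then have "tnorm G \<le> tnorm (\<lambda>n. c *\<^sub>R G n) / \<bar>c\<bar>" using False by simp
  then have "\<bar>c\<bar> * tnorm G \<le> tnorm (\<lambda>n. c *\<^sub>R G n)" using False by (simp add: field_simps)
  then show ?thesis using tnorm_scale_le[OF G, of c] by simp
qed

lemma tnorm_add:
  assumes G: "G \<in> lp_space p" and H: "H \<in> lp_space p"
  shows "tnorm (\<lambda>n. G n + H n) \<le> tnorm G + tnorm H"
proof (rule tnorm_le)
  fix N
  have "lp_norm p (PS (coef (\<lambda>n. G n + H n)) N) = lp_norm p (\<lambda>n. PS (coef G) N n + PS (coef H) N n)"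
    unfolding coef_add[OF G H] PS_add ..
  also have "\<dots> \<le> lp_norm p (PS (coef G) N) + lp_norm p (PS (coef H) N)"
    by (intro lp_minkowski PS_L p)
  also have "\<dots> \<le> tnorm G + tnorm H" by (intro add_mono tnorm_ge G H)
  finally show "lp_norm p (PS (coef (\<lambda>n. G n + H n)) N) \<le> tnorm G + tnorm H" .
qed

lemma coef_bound: "G \<in> lp_space p \<Longrightarrow> \<bar>coef G i\<bar> * lp_norm p F \<le> 2 * tnorm G"
  using coef_PS_bound[of "coef G" i] tnorm_ge[of G "Suc i"] tnorm_ge[of G i] by linarith

lemma tnorm_series:
  assumes yL: "\<And>k. y k \<in> lp_space p" and xL: "x \<in> lp_space p"
    and conv: "(\<lambda>N. lp_norm p (\<lambda>n. x n - (\<Sum>k<N. y k n))) \<longlonglongrightarrow> 0"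
    and bnd: "\<And>N. (\<Sum>k<N. tnorm (y k)) \<le> B"
  shows "tnorm x \<le> B"
proof -
  define Fn where "Fn = lp_norm p F"
  have Fn: "Fn > 0" unfolding Fn_def by (rule F_nonzero)
  define a where "a k = coef (y k)" for k
  define t where "t k = tnorm (y k)" for k
  have tnn: "t k \<ge> 0" for k unfolding t_def by (rule tnorm_nonneg[OF yL])
  have st: "summable t" by (rule summableI_nonneg_bounded[OF tnn]) (use bnd in \<open>auto simp: t_def\<close>)
  define T where "T K = suminf t - (\<Sum>k<K. t k)" for K
  have T0: "T \<longlonglongrightarrow> 0"
  proof -
    have "(\<lambda>K. suminf t - (\<Sum>k<K. t k)) \<longlonglongrightarrow> suminf t - suminf t"
      by (intro tendsto_intros summable_LIMSEQ st)
    then show ?thesis by (simp add: T_def[abs_def])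
  qed
  have tail: "(\<Sum>k\<in>{K..<K'}. t k) \<le> T K" if "K \<le> K'" for K K'
  proof -
    have "(\<Sum>k\<in>{K..<K'}. t k) = (\<Sum>k<K'. t k) - (\<Sum>k<K. t k)"
      using sum_diff_nat_ivl[of 0 K K' t] that by (simp add: atLeast0LessThan)
    also have "\<dots> \<le> T K" unfolding T_def using sum_le_suminf[OF st, of "{..<K'}"] tnn by auto
    finally show ?thesis .
  qed
  have abnd: "\<bar>a k i\<bar> \<le> 2 * t k / Fn" for k i
    using coef_bound[OF yL, of k i] Fn by (simp add: a_def t_def Fn_def[symmetric] field_simps)
  have sa: "summable (\<lambda>k. a k i)" for i
    by (rule summable_comparison_test'[where g="\<lambda>k. 2 * t k / Fn" and N=0])
      (use abnd st in \<open>auto intro: summable_divide summable_mult\<close>)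
  define b where "b i = (\<Sum>k. a k i)" for i
  define c where "c K i = (\<Sum>k<K. a k i)" for K i
  have clim: "(\<lambda>K. c K i) \<longlonglongrightarrow> b i" for i
    unfolding c_def b_def by (rule summable_LIMSEQ[OF sa])
  have PSa: "lp_norm p (PS (a k) N) \<le> t k" for k N
    unfolding a_def t_def by (rule tnorm_ge[OF yL])
  have PSc_diff: "lp_norm p (\<lambda>n. PS (c K') N n - PS (c K) N n) \<le> T K" if "K \<le> K'" for K K' N
  proof -
    have "(\<lambda>i. c K' i - c K i) = (\<lambda>i. \<Sum>k\<in>{K..<K'}. a k i)"
    proof (rule ext)
      fix i show "c K' i - c K i = (\<Sum>k\<in>{K..<K'}. a k i)"
        unfolding c_def using sum_diff_nat_ivl[of 0 K K' "\<lambda>k. a k i"] that by (simp add: atLeast0LessThan)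
    qed
    then have "(\<lambda>n. PS (c K') N n - PS (c K) N n) = (\<lambda>n. \<Sum>k\<in>{K..<K'}. PS (a k) N n)"
      by (metis PS_diff PS_sum)
    then have "lp_norm p (\<lambda>n. PS (c K') N n - PS (c K) N n) \<le> (\<Sum>k\<in>{K..<K'}. lp_norm p (PS (a k) N))"
      using lp_norm_sum_le[of "{K..<K'}" "\<lambda>k. PS (a k) N" p] PS_L p by simp
    also have "\<dots> \<le> (\<Sum>k\<in>{K..<K'}. t k)" by (intro sum_mono PSa)
    also have "\<dots> \<le> T K" by (rule tail[OF that])
    finally show ?thesis .
  qed
  have PSlim: "(\<lambda>K. (\<Sum>i<N. \<bar>b i - c (K + K0) i\<bar>) * Fn) \<longlonglongrightarrow> 0" for N K0
  proof -
    have "(\<lambda>K. c (K + K0) i) \<longlonglongrightarrow> b i" for i using LIMSEQ_ignore_initial_segment[OF clim] .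
    then have "(\<lambda>K. (\<Sum>i<N. \<bar>b i - c (K + K0) i\<bar>) * Fn) \<longlonglongrightarrow> (\<Sum>i<N. \<bar>b i - b i\<bar>) * Fn"
      by (intro tendsto_intros)
    then show ?thesis by simp
  qed
  have PSb_c: "lp_norm p (\<lambda>n. PS b N n - PS (c K) N n) \<le> T K" for K N
  proof -
    have *: "lp_norm p (\<lambda>n. PS b N n - PS (c K) N n) \<le> (\<Sum>i<N. \<bar>b i - c (K' + K) i\<bar>) * Fn + T K" for K'
    proof -
      have "lp_norm p (\<lambda>n. PS b N n - PS (c K) N n) \<le>
          lp_norm p (\<lambda>n. PS b N n - PS (c (K' + K)) N n) + lp_norm p (\<lambda>n. PS (c (K' + K)) N n - PS (c K) N n)"
        by (intro lp_triangle_diff PS_L p)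
      also have "\<dots> \<le> (\<Sum>i<N. \<bar>b i - c (K' + K) i\<bar>) * Fn + T K"
        using PS_diff_bound[of b N "c (K' + K)"] PSc_diff[of K "K' + K" N] by (simp add: Fn_def)
      finally show ?thesis .
    qed
    show ?thesis by (rule le_of_tendsto_plus[OF * PSlim[of K N]])
  qed
  have PSb: "lp_norm p (PS b N) \<le> B" for N
  proof (rule le_of_tendsto_plus[OF _ PSlim[of 0 N]])
    fix K
    have "lp_norm p (PS b N) \<le> lp_norm p (\<lambda>n. PS b N n - PS (c (K + 0)) N n) + lp_norm p (PS (c (K + 0)) N)"
      by (intro lp_norm_tri3 PS_L)
    also have "lp_norm p (PS (c (K + 0)) N) \<le> (\<Sum>k<K. t k)"
    proof -
      have "lp_norm p (PS (c (K + 0)) N) = lp_norm p (\<lambda>n. \<Sum>k<K. PS (a k) N n)"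
        unfolding c_def[abs_def] by (simp add: PS_sum)
      also have "\<dots> \<le> (\<Sum>k<K. lp_norm p (PS (a k) N))" by (intro lp_norm_sum_le PS_L p) auto
      also have "\<dots> \<le> (\<Sum>k<K. t k)" by (intro sum_mono PSa)
      finally show ?thesis .
    qed
    also have "(\<Sum>k<K. t k) \<le> B" using bnd by (simp add: t_def)
    finally show "lp_norm p (PS b N) \<le> (\<Sum>i<N. \<bar>b i - c (K + 0) i\<bar>) * Fn + B"
      using PS_diff_bound[of b N "c (K + 0)"] by (simp add: Fn_def)
  qed
  define Q where "Q K = (\<lambda>n. \<Sum>k<K. y k n)" for K
  have QL: "Q K \<in> lp_space p" for K unfolding Q_def by (intro lp_space_sum yL p0) auto
  have coefQ: "coef (Q K) = c K" for K
    unfolding Q_def c_def[abs_def] a_def by (rule coef_sum) (auto intro: yL)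
  have "lp_expansion p e b x" unfolding exp_iff
  proof (rule LIMSEQ_I)
    fix r :: real assume r: "r > 0"
    obtain K1 where K1: "\<And>K. K \<ge> K1 \<Longrightarrow> norm (T K - 0) < r / 3"
      using LIMSEQ_D[OF T0, of "r/3"] r by auto
    obtain K2 where K2: "\<And>K. K \<ge> K2 \<Longrightarrow> norm (lp_norm p (\<lambda>n. x n - (\<Sum>k<K. y k n)) - 0) < r / 3"
      using LIMSEQ_D[OF conv, of "r/3"] r by auto
    define K where "K = max K1 K2"
    have eQ: "(\<lambda>N. lp_norm p (\<lambda>n. Q K n - PS (c K) N n)) \<longlonglongrightarrow> 0"
      using coef_exp[OF QL[of K]] unfolding exp_iff coefQ .
    obtain N0 where N0: "\<And>N. N \<ge> N0 \<Longrightarrow> norm (lp_norm p (\<lambda>n. Q K n - PS (c K) N n) - 0) < r / 3"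
      using LIMSEQ_D[OF eQ, of "r/3"] r by auto
    have "norm (lp_norm p (\<lambda>n. x n - PS b N n) - 0) < r" if "N \<ge> N0" for N
    proof -
      have "lp_norm p (\<lambda>n. x n - PS b N n) \<le> lp_norm p (\<lambda>n. x n - Q K n) + lp_norm p (\<lambda>n. Q K n - PS b N n)"
        by (intro lp_triangle_diff xL QL PS_L p)
      also have "lp_norm p (\<lambda>n. Q K n - PS b N n) \<le> lp_norm p (\<lambda>n. Q K n - PS (c K) N n) + lp_norm p (\<lambda>n. PS (c K) N n - PS b N n)"
        by (intro lp_triangle_diff QL PS_L p)
      also have "lp_norm p (\<lambda>n. PS (c K) N n - PS b N n) \<le> T K"
        using PSb_c[of N K] by (simp add: lp_norm_commute)
      finally have "lp_norm p (\<lambda>n. x n - PS b N n) \<le> lp_norm p (\<lambda>n. x n - Q K n) + (lp_norm p (\<lambda>n. Q K n - PS (c K) N n) + T K)"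
        by simp
      moreover have "lp_norm p (\<lambda>n. x n - Q K n) < r/3" using K2[of K] by (simp add: K_def Q_def lp_norm_nonneg)
      moreover have "lp_norm p (\<lambda>n. Q K n - PS (c K) N n) < r/3" using N0[OF that] by (simp add: lp_norm_nonneg)
      moreover have "T K < r/3" using K1[of K] by (simp add: K_def)
      ultimately show ?thesis by (simp add: lp_norm_nonneg)
    qed
    then show "\<exists>N0. \<forall>N\<ge>N0. norm (lp_norm p (\<lambda>n. x n - PS b N n) - 0) < r" by blast
  qed
  then have "coef x = b" by (rule coef_eq[OF xL])
  then show ?thesis using PSb by (intro tnorm_le) simp
qed

lemma tnorm_bounded: "\<exists>C. \<forall>G\<in>lp_space p. tnorm G \<le> C * lp_norm p G"
  by (rule zabreiko[OF p tnorm_nonneg tnorm_scale tnorm_add tnorm_series]) auto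

end


context SB begin

lemma coef_cont: "\<exists>K0\<ge>0. \<forall>G\<in>lp_space p. \<forall>i. \<bar>coef G i\<bar> \<le> K0 * lp_norm p G"
proof -
  obtain C where C: "\<And>G. G \<in> lp_space p \<Longrightarrow> tnorm G \<le> C * lp_norm p G" using tnorm_bounded by blast
  define K0 where "K0 = 2 * max C 0 / lp_norm p F"
  have Fn: "lp_norm p F > 0" by (rule F_nonzero)
  have "\<bar>coef G i\<bar> \<le> K0 * lp_norm p G" if G: "G \<in> lp_space p" for G i
  proof -
    have "\<bar>coef G i\<bar> * lp_norm p F \<le> 2 * tnorm G" by (rule coef_bound[OF G])
    also have "\<dots> \<le> 2 * (max C 0 * lp_norm p G)"
      using C[OF G] lp_norm_nonneg[of p G] by (smt (verit) mult_right_mono max.cobounded1)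
    finally show ?thesis using Fn by (simp add: K0_def field_simps)
  qed
  moreover have "K0 \<ge> 0" using Fn by (simp add: K0_def)
  ultimately show ?thesis by blast
qed

definition K0 where "K0 = (SOME K. K \<ge> 0 \<and> (\<forall>G\<in>lp_space p. \<forall>i. \<bar>coef G i\<bar> \<le> K * lp_norm p G))"

lemma K0: "K0 \<ge> 0" "G \<in> lp_space p \<Longrightarrow> \<bar>coef G i\<bar> \<le> K0 * lp_norm p G"
  using someI_ex[OF coef_cont[unfolded Bex_def]] unfolding K0_def by blast+

lemma coef_finite:
  assumes S: "finite S"
  shows "coef (\<lambda>n. \<Sum>i\<in>S. c i *\<^sub>R e i n) = (\<lambda>i. if i \<in> S then c i else 0)"
proof (rule coef_eq)
  show HL: "(\<lambda>n. \<Sum>i\<in>S. c i *\<^sub>R e i n) \<in> lp_space p"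
    by (intro lp_space_sum lp_space_scale eL p0 S)
  obtain N0 where N0: "S \<subseteq> {..<N0}" using S finite_nat_iff_bounded by auto
  have eq: "PS (\<lambda>i. if i \<in> S then c i else 0) N = (\<lambda>n. \<Sum>i\<in>S. c i *\<^sub>R e i n)" if "N \<ge> N0" for N
  proof (rule ext)
    fix n
    have "PS (\<lambda>i. if i \<in> S then c i else 0) N n = (\<Sum>i<N. if i \<in> S then c i *\<^sub>R e i n else 0)"
      unfolding PS_def by (intro sum.cong) auto
    also have "\<dots> = (\<Sum>i\<in>{..<N} \<inter> S. c i *\<^sub>R e i n)" by (simp add: sum.inter_restrict)
    also have "{..<N} \<inter> S = S" using N0 that by auto
    finally show "PS (\<lambda>i. if i \<in> S then c i else 0) N n = (\<Sum>i\<in>S. c i *\<^sub>R e i n)" .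
  qed
  show "lp_expansion p e (\<lambda>i. if i \<in> S then c i else 0) (\<lambda>n. \<Sum>i\<in>S. c i *\<^sub>R e i n)"
    unfolding exp_iff
  proof (rule LIMSEQ_I)
    fix r :: real assume "r > 0"
    then show "\<exists>no. \<forall>N\<ge>no. norm (lp_norm p (\<lambda>n. (\<Sum>i\<in>S. c i *\<^sub>R e i n) - PS (\<lambda>i. if i \<in> S then c i else 0) N n) - 0) < r"
      using eq by (intro exI[of _ N0]) (auto simp: lp_norm_def)
  qed
qed

definition f where "f k G = coef G (inv \<sigma> k)"

lemma sig_inv: "\<sigma> (inv \<sigma> x) = x" "inv \<sigma> (\<sigma> i) = i"
  using bij by (auto simp: bij_def surj_f_inv_f inv_f_f)

lemma f_cont: "G \<in> lp_space p \<Longrightarrow> \<bar>f k G\<bar> \<le> K0 * lp_norm p G"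
  unfolding f_def by (rule K0(2))

lemma f_diff: "G \<in> lp_space p \<Longrightarrow> H \<in> lp_space p \<Longrightarrow> f k (\<lambda>n. G n - H n) = f k G - f k H"
  unfolding f_def by (simp add: coef_diff)

lemma f_covariant:
  assumes G: "G \<in> lp_space p"
  shows "f k (shift j G) = f (k - j) G"
proof -
  define a where "a = coef G"
  define \<tau> where "\<tau> i = inv \<sigma> (\<sigma> i + j)" for i
  define \<tau>' where "\<tau>' m = inv \<sigma> (\<sigma> m - j)" for m
  have tt: "\<tau>' (\<tau> i) = i" for i by (simp add: \<tau>_def \<tau>'_def sig_inv)
  have inj: "inj \<tau>" by (metis tt injI)
  define H where "H N = shift j (PS a N)" for N
  have HL: "H N \<in> lp_space p" for N unfolding H_def by (intro lp_space_shift PS_L)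
  have Hform: "H N = (\<lambda>n. \<Sum>m\<in>\<tau> ` {..<N}. a (\<tau>' m) *\<^sub>R e m n)" for N
  proof (rule ext)
    fix n
    have "H N n = (\<Sum>i<N. a i *\<^sub>R e (\<tau> i) n)"
      by (simp add: H_def PS_def shift_def e_def \<tau>_def sig_inv algebra_simps)
    also have "\<dots> = (\<Sum>m\<in>\<tau> ` {..<N}. a (\<tau>' m) *\<^sub>R e m n)"
      by (subst sum.reindex) (auto intro: inj_on_subset[OF inj] simp: tt)
    finally show "H N n = (\<Sum>m\<in>\<tau> ` {..<N}. a (\<tau>' m) *\<^sub>R e m n)" .
  qed
  have fH: "f k (H N) = f (k - j) G" if "N > inv \<sigma> (k - j)" for N
  proof -
    have "\<tau>' (inv \<sigma> k) = inv \<sigma> (k - j)" by (simp add: \<tau>'_def sig_inv)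
    moreover have "\<tau> (inv \<sigma> (k - j)) = inv \<sigma> k" by (simp add: \<tau>_def sig_inv)
    ultimately have "inv \<sigma> k \<in> \<tau> ` {..<N}" using that by (metis imageI lessThan_iff)
    then show ?thesis unfolding f_def Hform coef_finite[OF finite_imageI[OF finite_lessThan]]
      using \<open>\<tau>' (inv \<sigma> k) = inv \<sigma> (k - j)\<close> by (simp add: a_def)
  qed
  define N1 where "N1 = Suc (inv \<sigma> (k - j))"
  have bnd: "\<bar>f k (shift j G) - f (k - j) G\<bar> \<le> K0 * lp_norm p (\<lambda>n. G n - PS a (M + N1) n) + 0" for M
  proof -
    have "f k (shift j G) - f (k - j) G = f k (shift j G) - f k (H (M + N1))"
      using fH[of "M + N1"] by (simp add: N1_def)
    also have "\<dots> = f k (\<lambda>n. shift j G n - H (M + N1) n)"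
      by (rule f_diff[symmetric]) (intro lp_space_shift G HL)+
    finally have "\<bar>f k (shift j G) - f (k - j) G\<bar> \<le> K0 * lp_norm p (\<lambda>n. shift j G n - H (M + N1) n)"
      using f_cont[OF lp_space_diff[OF lp_space_shift[OF G] HL p0]] by simp
    also have "(\<lambda>n. shift j G n - H (M + N1) n) = shift j (\<lambda>n. G n - PS a (M + N1) n)"
      by (simp add: H_def shift_def)
    finally show ?thesis by (simp add: lp_norm_shift)
  qed
  have lim: "(\<lambda>M. K0 * lp_norm p (\<lambda>n. G n - PS a (M + N1) n)) \<longlonglongrightarrow> 0"
  proof -
    have "(\<lambda>N. lp_norm p (\<lambda>n. G n - PS a N n)) \<longlonglongrightarrow> 0" using coef_exp[OF G] unfolding exp_iff a_def .
    then have "(\<lambda>M. lp_norm p (\<lambda>n. G n - PS a (M + N1) n)) \<longlonglongrightarrow> 0" by (rule LIMSEQ_ignore_initial_segment)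
    then show ?thesis using tendsto_mult_right_zero by blast
  qed
  have "\<bar>f k (shift j G) - f (k - j) G\<bar> \<le> 0" by (rule le_of_tendsto_plus[OF bnd lim])
  then show ?thesis by simp
qed

definition delta :: "'a \<Rightarrow> int \<Rightarrow> 'a" where "delta x = (\<lambda>n. if n = 0 then x else 0)"

lemma delta_L: "delta x \<in> lp_space p"
proof -
  have "sum (\<lambda>n. norm (delta x n) powr p) S \<le> norm x powr p" if "finite S" for S
  proof -
    have "sum (\<lambda>n. norm (delta x n) powr p) S = sum (\<lambda>n. if n = 0 then norm x powr p else 0) S"
      by (intro sum.cong) (auto simp: delta_def)
    also have "\<dots> \<le> norm x powr p" using that by (simp add: sum.delta)
    finally show ?thesis .
  qed
  then show ?thesis using lp_space_iff_bounded by blast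
qed

lemma shift_delta: "shift m (delta x) = (\<lambda>n. if n = m then x else 0)"
  by (auto simp: shift_def delta_def)

lemma f_sum:
  assumes "finite S" "\<And>k. k \<in> S \<Longrightarrow> y k \<in> lp_space p"
  shows "f j (\<lambda>n. \<Sum>k\<in>S. w k *\<^sub>R y k n) = (\<Sum>k\<in>S. w k * f j (y k))"
  unfolding f_def using assms by (subst coef_sum) (auto simp: lp_space_scale coef_scale)

lemma functional_estimate:
  assumes S: "finite S"
  shows "(\<Sum>k\<in>S. \<bar>f k (delta x)\<bar> * norm (F (-k))) \<le> K0 * (norm x * (\<Sum>k\<in>S. norm (F (-k)) powr p) powr (1/p))"
proof -
  define w where "w k = sgn (f k (delta x)) * norm (F (-k))" for k
  define G where "G = (\<lambda>n. \<Sum>k\<in>S. w k *\<^sub>R shift (-k) (delta x) n)"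
  have GL: "G \<in> lp_space p" unfolding G_def
    by (intro lp_space_sum lp_space_scale lp_space_shift delta_L S p0)
  have "f 0 G = (\<Sum>k\<in>S. w k * f 0 (shift (-k) (delta x)))"
    unfolding G_def by (rule f_sum[OF S]) (intro lp_space_shift delta_L)
  also have "\<dots> = (\<Sum>k\<in>S. \<bar>f k (delta x)\<bar> * norm (F (-k)))"
    by (intro sum.cong refl) (simp add: f_covariant[OF delta_L] w_def abs_sgn)
  finally have fG: "f 0 G = (\<Sum>k\<in>S. \<bar>f k (delta x)\<bar> * norm (F (-k)))" .
  have Gn: "G n = (if -n \<in> S then w (-n) *\<^sub>R x else 0)" for n
  proof -
    have "G n = (\<Sum>k\<in>S. if k = -n then w k *\<^sub>R x else 0)"
      unfolding G_def shift_delta by (intro sum.cong) auto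
    also have "\<dots> = (if -n \<in> S then w (-n) *\<^sub>R x else 0)" using S by (simp add: sum.delta)
    finally show ?thesis .
  qed
  define Q where "Q = (\<Sum>k\<in>S. norm (F (-k)) powr p)"
  have Qnn: "Q \<ge> 0" unfolding Q_def by (intro sum_nonneg) auto
  have "lp_norm p G \<le> norm x * Q powr (1/p)"
  proof (rule lp_norm_le_from_finite(2))
    show "norm x * Q powr (1/p) \<ge> 0" by simp
    show "p > 0" by (rule p0)
    fix T :: "int set" assume T: "finite T"
    have pt: "norm (G n) powr p \<le> (if -n \<in> S then norm (F n) powr p * norm x powr p else 0)" for n
    proof (cases "-n \<in> S")
      case True
      have "norm (G n) \<le> norm (F n) * norm x"
        using True by (auto simp: Gn w_def abs_mult sgn_if)
      then have "norm (G n) powr p \<le> (norm (F n) * norm x) powr p" using p0 by (intro powr_mono2) auto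
      then show ?thesis using True by (simp add: powr_mult)
    qed (simp add: Gn)
    have "sum (\<lambda>n. norm (G n) powr p) T \<le> sum (\<lambda>n. if -n \<in> S then norm (F n) powr p * norm x powr p else 0) T"
      by (intro sum_mono pt)
    also have "\<dots> = sum (\<lambda>n. norm (F n) powr p * norm x powr p) (T \<inter> uminus ` S)"
      by (simp add: sum.inter_restrict[OF T] image_iff) (intro sum.cong refl, force)
    also have "\<dots> \<le> sum (\<lambda>n. norm (F n) powr p * norm x powr p) (uminus ` S)"
      by (intro sum_mono2) (auto simp: S)
    also have "\<dots> = Q * norm x powr p" unfolding Q_def
      by (subst sum.reindex) (auto simp: inj_on_def sum_distrib_right)
    also have "\<dots> = (norm x * Q powr (1/p)) powr p"
      using Qnn p0 by (simp add: powr_mult powr_powr mult.commute)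
    finally show "sum (\<lambda>n. norm (G n) powr p) T \<le> (norm x * Q powr (1/p)) powr p" .
  qed
  then have "\<bar>f 0 G\<bar> \<le> K0 * (norm x * Q powr (1/p))"
    using f_cont[OF GL, of 0] K0(1) by (meson mult_left_mono order_trans)
  then show ?thesis using fG by (simp add: Q_def)
qed

lemma pointwise_expansion:
  "(\<lambda>N. \<Sum>i<N. coef (delta x) i *\<^sub>R F (- \<sigma> i)) \<longlonglongrightarrow> x"
proof -
  have c: "(\<lambda>N. lp_norm p (\<lambda>n. delta x n - PS (coef (delta x)) N n)) \<longlonglongrightarrow> 0"
    using coef_exp[OF delta_L] unfolding exp_iff .
  have "norm ((\<Sum>i<N. coef (delta x) i *\<^sub>R F (- \<sigma> i)) - x) \<le> lp_norm p (\<lambda>n. delta x n - PS (coef (delta x)) N n)" for N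
  proof -
    have "norm (delta x 0 - PS (coef (delta x)) N 0) \<le> lp_norm p (\<lambda>n. delta x n - PS (coef (delta x)) N n)"
      by (rule pointwise_le_lp_norm[OF lp_space_diff[OF delta_L PS_L p0] p0])
    then show ?thesis by (simp add: delta_def PS_def e_def shift_def norm_minus_commute)
  qed
  then have "(\<lambda>N. norm ((\<Sum>i<N. coef (delta x) i *\<^sub>R F (- \<sigma> i)) - x)) \<longlonglongrightarrow> 0"
    by (intro squeeze0[OF _ _ c]) auto
  then show ?thesis by (simp add: LIM_zero_iff tendsto_norm_zero_iff)
qed

end


lemma closed_span_finite:
  fixes B :: "'a::banach set"
  assumes "finite B"
  shows "closed (span B)"
  using assms
proof (induction B rule: finite_induct)
  case empty then show ?case by simp
next
  case (insert a B)
  show ?case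
  proof (cases "a \<in> span B")
    case True
    then show ?thesis by (simp add: span_redundant[OF True] insert.IH)
  next
    case False
    define d where "d = infdist a (span B)"
    have d: "d > 0" unfolding d_def
      by (rule infdist_pos_not_in_closed[OF insert(3)]) (use False span_zero in auto)
    have low: "\<bar>t\<bar> * d \<le> norm (v + t *\<^sub>R a)" if v: "v \<in> span B" for v t
    proof (cases "t = 0")
      case True then show ?thesis by simp
    next
      case False
      have "d \<le> dist a (- (1/t) *\<^sub>R v)" unfolding d_def
        by (rule infdist_le) (intro span_scale v)
      also have "\<dots> = norm ((1/t) *\<^sub>R (v + t *\<^sub>R a))"
        using False by (simp add: dist_norm algebra_simps)
      also have "\<dots> = norm (v + t *\<^sub>R a) / \<bar>t\<bar>" by simp
      finally show ?thesis using False by (simp add: field_simps)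
    qed
    show ?thesis unfolding closed_sequential_limits
    proof (intro allI impI, elim conjE)
      fix z l assume zS: "\<forall>n. z n \<in> span (insert a B)" and zl: "z \<longlonglongrightarrow> l"
      have "\<forall>n. \<exists>t. z n - t *\<^sub>R a \<in> span B" using zS by (simp add: span_insert)
      from choice[OF this] obtain t where t: "\<And>n. z n - t n *\<^sub>R a \<in> span B" by blast
      have "Cauchy t"
      proof (rule metric_CauchyI)
        fix r :: real assume "r > 0"
        have "Cauchy z" using zl by (rule LIMSEQ_imp_Cauchy)
        then obtain M where M: "\<And>m n. m \<ge> M \<Longrightarrow> n \<ge> M \<Longrightarrow> dist (z m) (z n) < r * d"
          using \<open>r > 0\<close> d by (meson metric_CauchyD mult_pos_pos)
        have "dist (t m) (t n) < r" if "m \<ge> M" "n \<ge> M" for m n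
        proof -
          have "\<bar>t m - t n\<bar> * d \<le> norm ((z m - t m *\<^sub>R a) - (z n - t n *\<^sub>R a) + (t m - t n) *\<^sub>R a)"
            by (intro low span_diff t)
          also have "\<dots> = dist (z m) (z n)" by (simp add: dist_norm algebra_simps)
          also have "\<dots> < r * d" using M that by blast
          finally show ?thesis using d by (simp add: dist_real_def)
        qed
        then show "\<exists>M. \<forall>m\<ge>M. \<forall>n\<ge>M. dist (t m) (t n) < r" by blast
      qed
      then obtain \<tau> where tau: "t \<longlonglongrightarrow> \<tau>" using Cauchy_convergent_iff convergent_def by blast
      have "(\<lambda>n. z n - t n *\<^sub>R a) \<longlonglongrightarrow> l - \<tau> *\<^sub>R a" by (intro tendsto_intros zl tau)
      moreover have H: "\<And>x l. (\<forall>n. x n \<in> span B) \<Longrightarrow> x \<longlonglongrightarrow> l \<Longrightarrow> l \<in> span B"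
        using insert(3)[unfolded closed_sequential_limits] by blast
      ultimately have "l - \<tau> *\<^sub>R a \<in> span B"
        using t by (intro H[of "\<lambda>n. z n - t n *\<^sub>R a"]) auto
      then show "l \<in> span (insert a B)" by (auto simp: span_insert)
    qed
  qed
qed

lemma riesz_far:
  fixes B :: "'a::banach set"
  assumes "finite B" "span B \<noteq> UNIV"
  shows "\<exists>x. x \<noteq> 0 \<and> (\<forall>v\<in>span B. norm (x - v) > norm x / 2)"
proof -
  obtain y where y: "y \<notin> span B" using assms(2) by blast
  define d where "d = infdist y (span B)"
  have d: "d > 0" unfolding d_def
    by (rule infdist_pos_not_in_closed[OF closed_span_finite[OF assms(1)]]) (use y span_zero in auto)
  have "\<exists>v0\<in>span B. dist y v0 < 2 * d"
  proof (rule ccontr)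
    assume nt: "\<not> (\<exists>v0\<in>span B. dist y v0 < 2 * d)"
    have ne: "span B \<noteq> {}" using span_zero by blast
    have "2 * d \<le> (INF v\<in>span B. dist y v)"
      using nt by (intro cINF_greatest ne) auto
    then have "2 * d \<le> d" using ne by (simp add: d_def infdist_def)
    then show False using d by simp
  qed
  then obtain v0 where v0: "v0 \<in> span B" "dist y v0 < 2 * d" by blast
  define x where "x = y - v0"
  have far: "norm (x - v) \<ge> d" if "v \<in> span B" for v
  proof -
    have "d \<le> dist y (v0 + v)" unfolding d_def by (intro infdist_le span_add v0 that)
    then show ?thesis by (simp add: x_def dist_norm algebra_simps)
  qed
  have nx: "norm x < 2 * d" using v0 by (simp add: x_def dist_norm)
  have "x \<noteq> 0" using far[OF span_zero] d by auto
  moreover have "norm (x - v) > norm x / 2" if "v \<in> span B" for v using far[OF that] nx by linarith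
  ultimately show ?thesis by blast
qed


context SB begin

lemma finite_dim: "\<exists>B. finite B \<and> span B = (UNIV :: 'a set)"
proof (rule ccontr)
  assume nf: "\<not> ?thesis"
  define \<delta> where "\<delta> = 1 / (8 * (K0 + 1))"
  have \<delta>: "\<delta> > 0" "K0 * \<delta> \<le> 1/8" using K0(1) by (auto simp: \<delta>_def field_simps)
  define g where "g n = norm (F n) powr p" for n
  have sF: "g summable_on UNIV" using FL by (simp add: lp_space_def g_def[abs_def])
  obtain S0 where S0: "finite S0" "dist (sum g S0) (infsum g UNIV) \<le> \<delta> powr p"
    using infsum_finite_approximation[OF sF, of "\<delta> powr p"] \<delta> by auto
  have gnn: "g n \<ge> 0" for n by (simp add: g_def)
  have tailT: "sum g T \<le> \<delta> powr p" if T: "finite T" "T \<inter> S0 = {}" for T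
  proof -
    have "sum g T + sum g S0 = sum g (T \<union> S0)" using T S0 by (simp add: sum.union_disjoint)
    also have "\<dots> \<le> infsum g UNIV" by (rule finite_sum_le_infsum[OF sF]) (use T S0 gnn in auto)
    finally show ?thesis using S0(2) by (simp add: dist_real_def)
  qed
  define B where "B = F ` S0"
  have "span B \<noteq> UNIV" using nf S0(1) by (auto simp: B_def)
  then obtain x where x: "x \<noteq> 0" "\<And>v. v \<in> span B \<Longrightarrow> norm (x - v) > norm x / 2"
    using riesz_far[of B] S0(1) by (auto simp: B_def)
  define c where "c i = coef (delta x) i" for i
  have nx: "norm x > 0" using x by simp
  obtain N where N: "norm ((\<Sum>i<N. c i *\<^sub>R F (- \<sigma> i)) - x) < norm x / 4"
    using LIMSEQ_D[OF pointwise_expansion[of x], of "norm x / 4"] nx by (auto simp: c_def)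
  define A where "A = {..<N} \<inter> {i. - \<sigma> i \<in> S0}"
  define Bi where "Bi = {..<N} \<inter> - {i. - \<sigma> i \<in> S0}"
  define h where "h i = c i *\<^sub>R F (- \<sigma> i)" for i
  have split: "(\<Sum>i<N. h i) = (\<Sum>i\<in>A. h i) + (\<Sum>i\<in>Bi. h i)"
    unfolding A_def Bi_def using sum.If_cases[of "{..<N}" "\<lambda>i. - \<sigma> i \<in> S0" h h] by simp
  define v where "v = (\<Sum>i\<in>A. h i)"
  have vB: "v \<in> span B" unfolding v_def h_def
    by (intro span_sum span_scale span_base) (auto simp: A_def B_def)
  have injs: "inj \<sigma>" using bij by (simp add: bij_def)
  have finBi: "finite Bi" by (simp add: Bi_def)
  have "norm (\<Sum>i\<in>Bi. h i) \<le> (\<Sum>i\<in>Bi. \<bar>c i\<bar> * norm (F (- \<sigma> i)))"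
    unfolding h_def by (rule order_trans[OF norm_sum]) simp
  also have "\<dots> = (\<Sum>k\<in>\<sigma> ` Bi. \<bar>f k (delta x)\<bar> * norm (F (-k)))"
    by (subst sum.reindex) (auto intro: inj_on_subset[OF injs] simp: f_def c_def sig_inv)
  also have "\<dots> \<le> K0 * (norm x * (\<Sum>k\<in>\<sigma> ` Bi. norm (F (-k)) powr p) powr (1/p))"
    by (rule functional_estimate) (simp add: finBi)
  finally have est: "norm (\<Sum>i\<in>Bi. h i) \<le> K0 * (norm x * (\<Sum>k\<in>\<sigma> ` Bi. norm (F (-k)) powr p) powr (1/p))" .
  define Q where "Q = (\<Sum>k\<in>\<sigma> ` Bi. norm (F (-k)) powr p)"
  have Qnn: "Q \<ge> 0" unfolding Q_def by (intro sum_nonneg) auto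
  have Qle: "Q \<le> \<delta> powr p"
  proof -
    have "Q = sum g (uminus ` \<sigma> ` Bi)"
      unfolding Q_def by (subst sum.reindex) (auto simp: inj_on_def g_def)
    also have "\<dots> \<le> \<delta> powr p" by (rule tailT) (auto simp: finBi Bi_def)
    finally show ?thesis .
  qed
  have Qr: "Q powr (1/p) \<le> \<delta>"
  proof -
    have "Q powr (1/p) \<le> (\<delta> powr p) powr (1/p)"
      using Qle Qnn p0 by (intro powr_mono2) auto
    also have "\<dots> = \<delta>" using p0 \<delta> by (simp add: powr_powr)
    finally show ?thesis .
  qed
  have "K0 * (norm x * Q powr (1/p)) \<le> K0 * (norm x * \<delta>)"
    using K0(1) Qr by (intro mult_left_mono) auto
  also have "\<dots> = norm x * (K0 * \<delta>)" by simp
  also have "\<dots> \<le> norm x * (1/8)" using \<delta>(2) nx by (intro mult_left_mono) auto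
  finally have small: "norm (\<Sum>i\<in>Bi. h i) \<le> norm x / 8" using est unfolding Q_def by simp
  have t1: "norm (x - v) \<le> norm (x - (\<Sum>i<N. h i)) + norm ((\<Sum>i<N. h i) - v)"
    using norm_triangle_ineq[of "x - (\<Sum>i<N. h i)" "(\<Sum>i<N. h i) - v"] by simp
  have t2: "norm ((\<Sum>i<N. h i) - v) = norm (\<Sum>i\<in>Bi. h i)" unfolding split v_def by simp
  have t3: "norm (x - (\<Sum>i<N. h i)) < norm x / 4" using N by (simp add: h_def norm_minus_commute)
  have "norm (x - v) < norm x / 2" using t1 t2 t3 small nx by linarith
  then show False using x(2)[OF vB] by linarith
qed

end

theorem proposition3p5:
  fixes p :: real and F :: "int \<Rightarrow> 'a::banach"
  assumes separable: "\<exists>D::'a set. countable D \<and> closure D = UNIV"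
    and inf_dim: "\<not> (\<exists>B::'a set. finite B \<and> span B = UNIV)"
    and p: "1 \<le> p"
    and F: "F \<in> lp_space p"
  shows "\<not> (\<exists>\<sigma>::nat \<Rightarrow> int. bij \<sigma> \<and> lp_schauder_basis p (\<lambda>i. shift (\<sigma> i) F))"
proof
  assume "\<exists>\<sigma>::nat \<Rightarrow> int. bij \<sigma> \<and> lp_schauder_basis p (\<lambda>i. shift (\<sigma> i) F)"
  then obtain \<sigma> :: "nat \<Rightarrow> int" where s: "bij \<sigma>" "lp_schauder_basis p (\<lambda>i. shift (\<sigma> i) F)" by blast
  interpret SB p F \<sigma> using p F s by unfold_locales
  show False using finite_dim inf_dim by blast
qed


end
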